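(* Let $(\mathcal{M},\omega)$ be a symplectic manifold of dimension $2d$, $\pi:\mathcal{M}\to\mathcal{B}$ a fibration in compact connected Lagrangian tori, and $H=F\circ\pi$ with $F\in C^\infty(\mathcal{B})$ satisfying the Rüssmann condition. Then the set of points $b\in\mathcal{B}$ such that there is no nonzero $k\in E_b$ with $dF_b(k)=0$ (i.e. the set of tori $\pi^{-1}(b)$ on which the dynamics of the Hamiltonian vector field $X_H$ is ergodic) is dense in $\mathcal{B}$.
   Context: Near each point of $\mathcal{B}$ there are canonical action-angle coordinates $(x,\xi):\pi^{-1}(\mathcal{O})\to\mathbb{T}^d\times\mathbb{R}^d$, $\mathbb{T}^d=\mathbb{R}^d/\mathbb{Z}^d$. The Duistermaat connection $\nabla$ on $\mathcal{B}$ is the torsion-free flat connection for which the $d\xi_j$ are parallel. The resonance bundle $E\subset T\mathcal{B}$ is the lattice subbundle whose fiber $E_b$ is the $\mathbb{Z}$-span of $\partial/\partial\xi_1,\dots,\partial/\partial\xi_d$ at $b$ (dual to the lattice spanned by the $d\xi_j$); local sections of $E$ are parallel. On $\pi^{-1}(b)$, $X_H$ is the linear flow $\dot x_j=\partial F/\partial\xi_j(b)$, and a nonzero $k\in E_b$ with $dF_b(k)=\sum_jk_j\partial F/\partial\xi_j(b)=0$ is a resonance relation. Rüssmann condition: for every open $\mathcal{O}$ and every non-vanishing parallel vector field $X$ on $\mathcal{O}$, $dF(X)$ does not vanish identically on any nonempty open subset of $\mathcal{O}$. *)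

theory Defs
  imports "HOL-Analysis.Analysis"
begin

text \<open>The base B of the Lagrangian torus fibration is modelled by its integral affine
  structure (action coordinates): an atlas of charts xi : U -> R^d whose transition
  maps are locally integral affine.\<close>

definition int_lattice :: "'a::euclidean_space set" where
  "int_lattice = {x. \<forall>i\<in>Basis. x \<bullet> i \<in> \<int>}"

definition action_atlas :: "('b::topological_space set \<times> ('b \<Rightarrow> 'a::euclidean_space)) set \<Rightarrow> bool" where
  "action_atlas A \<longleftrightarrow>
     (\<forall>(U,\<phi>)\<in>A. open U \<and> open (\<phi> ` U) \<and> homeomorphism U (\<phi> ` U) \<phi> (inv_into U \<phi>)) \<and>
     (\<Union>(U,\<phi>)\<in>A. U) = UNIV \<and>
     (\<forall>(U,\<phi>)\<in>A. \<forall>(V,\<psi>)\<in>A. \<forall>b\<in>U \<inter> V.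
        \<exists>N L c. open N \<and> b \<in> N \<and> linear L \<and> bij L \<and> L ` int_lattice = int_lattice \<and>
          (\<forall>y\<in>N \<inter> U \<inter> V. \<psi> y = L (\<phi> y) + c))"

fun Ck_on :: "nat \<Rightarrow> 'a::euclidean_space set \<Rightarrow> ('a \<Rightarrow> real) \<Rightarrow> bool" where
  "Ck_on 0 S f \<longleftrightarrow> continuous_on S f"
| "Ck_on (Suc k) S f \<longleftrightarrow> f differentiable_on S \<and>
     (\<forall>v. Ck_on k S (\<lambda>x. frechet_derivative f (at x) v))"

definition smooth_on :: "'a::euclidean_space set \<Rightarrow> ('a \<Rightarrow> real) \<Rightarrow> bool" where
  "smooth_on S f \<longleftrightarrow> (\<forall>k. Ck_on k S f)"

definition smooth_fun :: "('b::topological_space set \<times> ('b \<Rightarrow> 'a::euclidean_space)) set \<Rightarrow> ('b \<Rightarrow> real) \<Rightarrow> bool" where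
  "smooth_fun A F \<longleftrightarrow> (\<forall>(U,\<phi>)\<in>A. smooth_on (\<phi> ` U) (F \<circ> inv_into U \<phi>))"

text \<open>dF_b(k) for k given by its action-coordinate components in the chart (U,phi).\<close>
definition dF :: "('b \<Rightarrow> real) \<Rightarrow> 'b set \<Rightarrow> ('b \<Rightarrow> 'a::euclidean_space) \<Rightarrow> 'b \<Rightarrow> 'a \<Rightarrow> real" where
  "dF F U \<phi> b v = frechet_derivative (F \<circ> inv_into U \<phi>) (at (\<phi> b)) v"

text \<open>b is non-resonant: no nonzero k in E_b (integer vector in action coordinates)
  with dF_b(k) = 0.\<close>
definition nonresonant :: "('b::topological_space set \<times> ('b \<Rightarrow> 'a::euclidean_space)) set \<Rightarrow> ('b \<Rightarrow> real) \<Rightarrow> 'b \<Rightarrow> bool" where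
  "nonresonant A F b \<longleftrightarrow>
     (\<forall>(U,\<phi>)\<in>A. b \<in> U \<longrightarrow> (\<forall>k\<in>int_lattice. k \<noteq> 0 \<longrightarrow> dF F U \<phi> b k \<noteq> 0))"

text \<open>A vector field on Ob is given by its coordinate representatives X (U,phi) b in each
  chart, compatible under chart changes; it is parallel (for the Duistermaat connection)
  iff the representatives are locally constant.\<close>
definition parallel_field ::
  "('b::topological_space set \<times> ('b \<Rightarrow> 'a::euclidean_space)) set \<Rightarrow> 'b set \<Rightarrow>
   ('b set \<times> ('b \<Rightarrow> 'a) \<Rightarrow> 'b \<Rightarrow> 'a) \<Rightarrow> bool" where
  "parallel_field A Ob X \<longleftrightarrow>
     (\<forall>(U,\<phi>)\<in>A. \<forall>(V,\<psi>)\<in>A. \<forall>b\<in>U \<inter> V \<inter> Ob.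
        X (V,\<psi>) b = frechet_derivative (\<psi> \<circ> inv_into U \<phi>) (at (\<phi> b)) (X (U,\<phi>) b)) \<and>
     (\<forall>(U,\<phi>)\<in>A. \<forall>b\<in>U \<inter> Ob. \<exists>N. open N \<and> b \<in> N \<and>
        (\<forall>y\<in>N \<inter> U \<inter> Ob. X (U,\<phi>) y = X (U,\<phi>) b))"

definition nonvanishing_field ::
  "('b::topological_space set \<times> ('b \<Rightarrow> 'a::euclidean_space)) set \<Rightarrow> 'b set \<Rightarrow>
   ('b set \<times> ('b \<Rightarrow> 'a) \<Rightarrow> 'b \<Rightarrow> 'a) \<Rightarrow> bool" where
  "nonvanishing_field A Ob X \<longleftrightarrow> (\<forall>(U,\<phi>)\<in>A. \<forall>b\<in>U \<inter> Ob. X (U,\<phi>) b \<noteq> 0)"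

definition russmann :: "('b::topological_space set \<times> ('b \<Rightarrow> 'a::euclidean_space)) set \<Rightarrow> ('b \<Rightarrow> real) \<Rightarrow> bool" where
  "russmann A F \<longleftrightarrow>
     (\<forall>Ob X. open Ob \<and> parallel_field A Ob X \<and> nonvanishing_field A Ob X \<longrightarrow>
        (\<forall>W. open W \<and> W \<noteq> {} \<and> W \<subseteq> Ob \<longrightarrow>
           \<not> (\<forall>(U,\<phi>)\<in>A. \<forall>b\<in>U \<inter> W. dF F U \<phi> b (X (U,\<phi>) b) = 0)))"

end

theory Submission
  imports Defs
begin

lemma chart_facts:
  assumes "action_atlas A" "(U,\<phi>) \<in> A"
  shows "open U" "open (\<phi> ` U)" "homeomorphism U (\<phi> ` U) \<phi> (inv_into U \<phi>)"
  using assms unfolding action_atlas_def by fastforce+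

lemma chart_inv:
  assumes "action_atlas A" "(U,\<phi>) \<in> A" "x \<in> U"
  shows "inv_into U \<phi> (\<phi> x) = x"
  using chart_facts(3)[OF assms(1,2)] assms(3) unfolding homeomorphism_def by auto

lemma chart_inv2:
  assumes "action_atlas A" "(U,\<phi>) \<in> A" "z \<in> \<phi> ` U"
  shows "\<phi> (inv_into U \<phi> z) = z" "inv_into U \<phi> z \<in> U"
  using chart_facts(3)[OF assms(1,2)] assms(3) unfolding homeomorphism_def by auto

lemma chart_open_image:
  assumes "action_atlas A" "(U,\<phi>) \<in> A" "open S" "S \<subseteq> U"
  shows "open (\<phi> ` S)"
proof -
  have "openin (top_of_set U) S" using assms by (simp add: openin_open_eq chart_facts(1)[OF assms(1,2)])
  then have "openin (top_of_set (\<phi> ` U)) (\<phi> ` S)"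
    using homeomorphism_imp_open_map[OF chart_facts(3)[OF assms(1,2)]] by blast
  then show ?thesis using chart_facts(2)[OF assms(1,2)] openin_open_trans by blast
qed

lemma chart_cont:
  assumes "action_atlas A" "(U,\<phi>) \<in> A"
  shows "continuous_on U \<phi>"
  using chart_facts(3)[OF assms] unfolding homeomorphism_def by auto

lemma smooth_diff:
  assumes "action_atlas A" "smooth_fun A F" "(V,\<psi>) \<in> A" "y \<in> V"
  shows "((F \<circ> inv_into V \<psi>) has_derivative frechet_derivative (F \<circ> inv_into V \<psi>) (at (\<psi> y))) (at (\<psi> y))"
proof -
  have "smooth_on (\<psi> ` V) (F \<circ> inv_into V \<psi>)" using assms(2,3) unfolding smooth_fun_def by auto
  then have "Ck_on 1 (\<psi> ` V) (F \<circ> inv_into V \<psi>)" unfolding smooth_on_def by blast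
  then have "(F \<circ> inv_into V \<psi>) differentiable_on (\<psi> ` V)" by simp
  then have "(F \<circ> inv_into V \<psi>) differentiable (at (\<psi> y))"
    using chart_facts(2)[OF assms(1,3)] assms(4) differentiable_on_eq_differentiable_at by blast
  then show ?thesis using frechet_derivative_works by blast
qed

lemma dcont:
  assumes "action_atlas A" "smooth_fun A F" "(V,\<psi>) \<in> A"
  shows "continuous_on (\<psi> ` V) (\<lambda>x. frechet_derivative (F \<circ> inv_into V \<psi>) (at x) k)"
proof -
  have "smooth_on (\<psi> ` V) (F \<circ> inv_into V \<psi>)" using assms(2,3) unfolding smooth_fun_def by auto
  then have "Ck_on 2 (\<psi> ` V) (F \<circ> inv_into V \<psi>)" unfolding smooth_on_def by blast
  then have "(\<lambda>x. frechet_derivative (F \<circ> inv_into V \<psi>) (at x) k) differentiable_on (\<psi> ` V)"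
    by (simp add: numeral_2_eq_2)
  then show ?thesis by (rule differentiable_imp_continuous_on)
qed

lemma chart_trans:
  assumes at: "action_atlas A" and sm: "smooth_fun A F" and U: "(U,\<phi>) \<in> A" and V: "(V,\<psi>) \<in> A"
    and b: "b \<in> U" "b \<in> V"
  shows "\<exists>N L. open N \<and> b \<in> N \<and> linear L \<and> bij L \<and> L ` int_lattice = int_lattice \<and>
     (\<forall>y\<in>N \<inter> U \<inter> V. ((\<psi> \<circ> inv_into U \<phi>) has_derivative L) (at (\<phi> y)) \<and>
        (\<forall>v. dF F U \<phi> y v = dF F V \<psi> y (L v)))"
proof -
  obtain N L c where N: "open N" "b \<in> N" "linear L" "bij L" "L ` int_lattice = int_lattice"
    and eq: "\<forall>y\<in>N \<inter> U \<inter> V. \<psi> y = L (\<phi> y) + c"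
    using at U V b unfolding action_atlas_def by blast
  have oU: "open U" and oV: "open V" using chart_facts(1) at U V by blast+
  define G where "G = \<phi> ` (N \<inter> U \<inter> V)"
  have oG: "open G" unfolding G_def by (rule chart_open_image[OF at U]) (use N oU oV in auto)
  have Geq: "(\<psi> \<circ> inv_into U \<phi>) z = L z + c" if "z \<in> G" for z
  proof -
    obtain w where w: "w \<in> N \<inter> U \<inter> V" "z = \<phi> w" using \<open>z \<in> G\<close> G_def by auto
    then show ?thesis using chart_inv[OF at U] eq by auto
  qed
  have GF: "(F \<circ> inv_into U \<phi>) z = (F \<circ> inv_into V \<psi>) (L z + c)" if "z \<in> G" for z
  proof -
    obtain w where w: "w \<in> N \<inter> U \<inter> V" "z = \<phi> w" using \<open>z \<in> G\<close> G_def by auto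
    have "\<psi> w = L (\<phi> w) + c" using eq w by auto
    then show ?thesis using chart_inv[OF at U] chart_inv[OF at V] w by (metis IntD1 IntD2 comp_apply)
  qed
  have "((\<psi> \<circ> inv_into U \<phi>) has_derivative L) (at (\<phi> y)) \<and>
        (\<forall>v. dF F U \<phi> y v = dF F V \<psi> y (L v))" if y: "y \<in> N \<inter> U \<inter> V" for y
  proof
    have yG: "\<phi> y \<in> G" using y G_def by auto
    have aff: "((\<lambda>z. L z + c) has_derivative L) (at (\<phi> y))"
      using N(3) by (auto intro!: derivative_eq_intros linear_imp_has_derivative)
    show "((\<psi> \<circ> inv_into U \<phi>) has_derivative L) (at (\<phi> y))"
      by (rule has_derivative_transform_within_open[OF aff oG yG]) (use Geq in auto)
    have "\<psi> y = L (\<phi> y) + c" using eq y by auto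
    then have d: "((F \<circ> inv_into V \<psi>) has_derivative frechet_derivative (F \<circ> inv_into V \<psi>) (at (\<psi> y))) (at (L (\<phi> y) + c))"
      using smooth_diff[OF at sm V, of y] y by auto
    have "((\<lambda>z. (F \<circ> inv_into V \<psi>) (L z + c)) has_derivative (\<lambda>v. frechet_derivative (F \<circ> inv_into V \<psi>) (at (\<psi> y)) (L v))) (at (\<phi> y))"
      by (rule has_derivative_compose[OF aff d])
    then have "((F \<circ> inv_into U \<phi>) has_derivative (\<lambda>v. frechet_derivative (F \<circ> inv_into V \<psi>) (at (\<psi> y)) (L v))) (at (\<phi> y))"
      by (rule has_derivative_transform_within_open[OF _ oG yG]) (use GF in auto)
    then have "frechet_derivative (F \<circ> inv_into U \<phi>) (at (\<phi> y)) = (\<lambda>v. frechet_derivative (F \<circ> inv_into V \<psi>) (at (\<psi> y)) (L v))"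
      using frechet_derivative_at by metis
    then show "\<forall>v. dF F U \<phi> y v = dF F V \<psi> y (L v)" unfolding dF_def by simp
  qed
  then show ?thesis using N by blast
qed

lemma countable_lattice: "countable (int_lattice :: 'a::euclidean_space set)"
proof -
  define h where "h = (\<lambda>x::'a. restrict (\<lambda>i. x \<bullet> i) Basis)"
  have ci: "countable (\<int> :: real set)" unfolding Ints_def by simp
  have "h ` int_lattice \<subseteq> Pi\<^sub>E Basis (\<lambda>_. \<int>)"
    unfolding h_def int_lattice_def by (auto simp: PiE_iff)
  then have "countable (h ` int_lattice)"
    using countable_PiE[of Basis "\<lambda>_. \<int>"] ci countable_subset by auto
  moreover have "inj_on h int_lattice"
  proof (rule inj_onI)
    fix x y assume "h x = h y"
    then have "\<forall>i\<in>Basis. x \<bullet> i = y \<bullet> i" unfolding h_def by (metis restrict_apply')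
    then show "x = y" using euclidean_eqI by blast
  qed
  ultimately show ?thesis using countable_image_inj_on by blast
qed

lemma dense_lemma:
  assumes "\<And>W. open W \<Longrightarrow> W \<noteq> {} \<Longrightarrow> W \<inter> S \<noteq> {}"
  shows "closure S = UNIV"
proof -
  have "interior (- S) = {}"
    using assms[of "interior (-S)"] interior_subset by blast
  then show ?thesis by (simp add: closure_interior)
qed

lemma no_interior:
  fixes A :: "('b::topological_space set \<times> ('b \<Rightarrow> 'a::euclidean_space)) set"
  assumes at: "action_atlas A" and sm: "smooth_fun A F" and ru: "russmann A F"
    and U0: "(U0,\<phi>0) \<in> A" and k: "k \<in> int_lattice" "k \<noteq> 0"
    and B: "open B" "B \<noteq> {}" "B \<subseteq> \<phi>0 ` U0"
    and Z: "\<forall>z\<in>B. frechet_derivative (F \<circ> inv_into U0 \<phi>0) (at z) k = 0"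
  shows False
proof -
  define Ob where "Ob = \<phi>0 -` B \<inter> U0"
  define X :: "'b set \<times> ('b \<Rightarrow> 'a) \<Rightarrow> 'b \<Rightarrow> 'a" where "X = (\<lambda>p b. frechet_derivative (snd p \<circ> inv_into U0 \<phi>0) (at (\<phi>0 b)) k)"
  have oU0: "open U0" using chart_facts(1)[OF at U0] .
  have oOb: "open Ob" unfolding Ob_def
    using continuous_on_open_vimage[OF oU0] chart_cont[OF at U0] B(1) by blast
  have ObU0: "Ob \<subseteq> U0" unfolding Ob_def by auto
  have Obne: "Ob \<noteq> {}" unfolding Ob_def using B(2,3) by blast
  have compat: "X (V,\<psi>) b = frechet_derivative (\<psi> \<circ> inv_into U \<phi>) (at (\<phi> b)) (X (U,\<phi>) b)"
    if U: "(U,\<phi>) \<in> A" and V: "(V,\<psi>) \<in> A" and b: "b \<in> U \<inter> V \<inter> Ob" for U \<phi> V \<psi> b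
  proof -
    have b0: "b \<in> U0" using b ObU0 by auto
    have bU: "b \<in> U" and bV: "b \<in> V" using b by auto
    obtain N1 L1 where N1: "open N1" "b \<in> N1" and
      d1: "\<forall>y\<in>N1 \<inter> U0 \<inter> U. ((\<phi> \<circ> inv_into U0 \<phi>0) has_derivative L1) (at (\<phi>0 y))"
      using chart_trans[OF at sm U0 U b0 bU] by blast
    obtain N2 L2 where N2: "open N2" "b \<in> N2" and
      d2: "\<forall>y\<in>N2 \<inter> U \<inter> V. ((\<psi> \<circ> inv_into U \<phi>) has_derivative L2) (at (\<phi> y))"
      using chart_trans[OF at sm U V bU bV] by blast
    have D1: "((\<phi> \<circ> inv_into U0 \<phi>0) has_derivative L1) (at (\<phi>0 b))" using d1 N1 bU b0 by blast
    have D2: "((\<psi> \<circ> inv_into U \<phi>) has_derivative L2) (at ((\<phi> \<circ> inv_into U0 \<phi>0) (\<phi>0 b)))"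
      using d2 N2 bU bV chart_inv[OF at U0 b0] by simp
    have D3: "((\<lambda>z. (\<psi> \<circ> inv_into U \<phi>) ((\<phi> \<circ> inv_into U0 \<phi>0) z)) has_derivative (\<lambda>v. L2 (L1 v))) (at (\<phi>0 b))"
      by (rule has_derivative_compose[OF D1 D2])
    define G where "G = \<phi>0 ` (U0 \<inter> U \<inter> V)"
    have oG: "open G" unfolding G_def
      by (rule chart_open_image[OF at U0]) (use oU0 chart_facts(1)[OF at U] chart_facts(1)[OF at V] in auto)
    have bG: "\<phi>0 b \<in> G" unfolding G_def using b b0 by auto
    have "((\<psi> \<circ> inv_into U0 \<phi>0) has_derivative (\<lambda>v. L2 (L1 v))) (at (\<phi>0 b))"
    proof (rule has_derivative_transform_within_open[OF D3 oG bG])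
      fix z assume "z \<in> G"
      then obtain w where w: "w \<in> U0 \<inter> U \<inter> V" "z = \<phi>0 w" unfolding G_def by auto
      then show "(\<psi> \<circ> inv_into U \<phi>) ((\<phi> \<circ> inv_into U0 \<phi>0) z) = (\<psi> \<circ> inv_into U0 \<phi>0) z"
        using chart_inv[OF at U0] chart_inv[OF at U] by auto
    qed
    then have "frechet_derivative (\<psi> \<circ> inv_into U0 \<phi>0) (at (\<phi>0 b)) = (\<lambda>v. L2 (L1 v))"
      using frechet_derivative_at by metis
    moreover have "frechet_derivative (\<phi> \<circ> inv_into U0 \<phi>0) (at (\<phi>0 b)) = L1"
      using D1 frechet_derivative_at by metis
    moreover have "frechet_derivative (\<psi> \<circ> inv_into U \<phi>) (at (\<phi> b)) = L2"
      using D2 chart_inv[OF at U0 b0] frechet_derivative_at by (metis comp_apply)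
    ultimately show ?thesis unfolding X_def by simp
  qed
  have loc: "\<exists>N L. open N \<and> b \<in> N \<and> linear L \<and> bij L \<and> (\<forall>y\<in>N \<inter> U \<inter> Ob. X (U,\<phi>) y = L k)
        \<and> dF F U0 \<phi>0 b k = dF F U \<phi> b (L k)"
    if U: "(U,\<phi>) \<in> A" and b: "b \<in> U \<inter> Ob" for U \<phi> b
  proof -
    have b0: "b \<in> U0" using b ObU0 by auto
    have bU: "b \<in> U" using b by auto
    obtain N L where N: "open N" "b \<in> N" "linear L" "bij L" and
      d: "\<forall>y\<in>N \<inter> U0 \<inter> U. ((\<phi> \<circ> inv_into U0 \<phi>0) has_derivative L) (at (\<phi>0 y)) \<and>
        (\<forall>v. dF F U0 \<phi>0 y v = dF F U \<phi> y (L v))"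
      using chart_trans[OF at sm U0 U b0 bU] by blast
    have c1: "\<forall>y\<in>N \<inter> U \<inter> Ob. X (U,\<phi>) y = L k"
    proof
      fix y assume y: "y \<in> N \<inter> U \<inter> Ob"
      then have "y \<in> N \<inter> U0 \<inter> U" using ObU0 by blast
      then have "((\<phi> \<circ> inv_into U0 \<phi>0) has_derivative L) (at (\<phi>0 y))" using d by blast
      then have "frechet_derivative (\<phi> \<circ> inv_into U0 \<phi>0) (at (\<phi>0 y)) = L"
        by (rule frechet_derivative_at[symmetric])
      then show "X (U,\<phi>) y = L k" unfolding X_def by simp
    qed
    have bN: "b \<in> N \<inter> U0 \<inter> U" using N b b0 by blast
    have c2: "dF F U0 \<phi>0 b k = dF F U \<phi> b (L k)" using d bN by blast
    show ?thesis using N c1 c2 by blast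
  qed
  have par: "parallel_field A Ob X"
    unfolding parallel_field_def
  proof (intro conjI)
    show "\<forall>(U, \<phi>)\<in>A. \<forall>(V, \<psi>)\<in>A. \<forall>b\<in>U \<inter> V \<inter> Ob.
        X (V, \<psi>) b = frechet_derivative (\<psi> \<circ> inv_into U \<phi>) (at (\<phi> b)) (X (U, \<phi>) b)"
      using compat by blast
    show "\<forall>(U, \<phi>)\<in>A. \<forall>b\<in>U \<inter> Ob. \<exists>N. open N \<and> b \<in> N \<and> (\<forall>y\<in>N \<inter> U \<inter> Ob. X (U, \<phi>) y = X (U, \<phi>) b)"
    proof (clarify)
      fix U \<phi> b assume U: "(U,\<phi>) \<in> A" and b: "b \<in> U" "b \<in> Ob"
      obtain N L where "open N" "b \<in> N" "\<forall>y\<in>N \<inter> U \<inter> Ob. X (U,\<phi>) y = L k"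
        using loc[OF U] b by blast
      then show "\<exists>N. open N \<and> b \<in> N \<and> (\<forall>y\<in>N \<inter> U \<inter> Ob. X (U, \<phi>) y = X (U, \<phi>) b)"
        using b by (metis IntI)
    qed
  qed
  have nv: "nonvanishing_field A Ob X"
    unfolding nonvanishing_field_def
  proof (clarify)
    fix U \<phi> b assume U: "(U,\<phi>) \<in> A" and b: "b \<in> U" "b \<in> Ob" and X0: "X (U,\<phi>) b = 0"
    obtain N L where "open N" "b \<in> N" "linear L" "bij L" "\<forall>y\<in>N \<inter> U \<inter> Ob. X (U,\<phi>) y = L k"
      using loc[OF U] b by blast
    then have "L k = L 0" using X0 b linear_0 by (metis IntI)
    then have "k = 0" using \<open>bij L\<close> by (metis bij_def injD)
    then show False using k by simp
  qed
  have "\<not> (\<forall>(U,\<phi>)\<in>A. \<forall>b\<in>U \<inter> Ob. dF F U \<phi> b (X (U,\<phi>) b) = 0)"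
    using ru oOb par nv Obne unfolding russmann_def by blast
  then obtain V \<psi> b where V: "(V,\<psi>) \<in> A" and b: "b \<in> V" "b \<in> Ob" and
    ne: "dF F V \<psi> b (X (V,\<psi>) b) \<noteq> 0"
    by fast
  obtain N L where "open N" "b \<in> N" "linear L" "bij L" "\<forall>y\<in>N \<inter> V \<inter> Ob. X (V,\<psi>) y = L k"
     and e: "dF F U0 \<phi>0 b k = dF F V \<psi> b (L k)"
    using loc[OF V] b by blast
  then have "X (V,\<psi>) b = L k" using b by blast
  then have "dF F U0 \<phi>0 b k \<noteq> 0" using ne e by simp
  moreover have "\<phi>0 b \<in> B" using b Ob_def by auto
  ultimately show False using Z unfolding dF_def by auto
qed

theorem mainTheorem11:
  fixes A :: "('b::topological_space set \<times> ('b \<Rightarrow> 'a::euclidean_space)) set"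
    and F :: "'b \<Rightarrow> real"
  assumes "action_atlas A"
    and "smooth_fun A F"
    and "russmann A F"
  shows "closure {b. nonresonant A F b} = UNIV"
proof (rule dense_lemma)
  note at = assms(1) and sm = assms(2) and ru = assms(3)
  fix W0 :: "'b set" assume oW0: "open W0" and "W0 \<noteq> {}"
  then obtain b0 where b0: "b0 \<in> W0" by blast
  have "b0 \<in> (\<Union>(U,\<phi>)\<in>A. U)" using at unfolding action_atlas_def by auto
  then obtain U0 \<phi>0 where U0: "(U0,\<phi>0) \<in> A" and b0U: "b0 \<in> U0" by auto
  have oU0: "open U0" using chart_facts(1)[OF at U0] .
  define f where "f = F \<circ> inv_into U0 \<phi>0"
  define S0 where "S0 = \<phi>0 ` (W0 \<inter> U0)"
  have oS0: "open S0" unfolding S0_def by (rule chart_open_image[OF at U0]) (use oW0 oU0 in auto)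
  have cS0: "\<phi>0 b0 \<in> S0" unfolding S0_def using b0 b0U by auto
  obtain r where r: "r > 0" "cball (\<phi>0 b0) r \<subseteq> S0" using open_contains_cball oS0 cS0 by blast
  define C where "C = cball (\<phi>0 b0) r"
  have CT: "C \<subseteq> \<phi>0 ` U0" using r(2) unfolding C_def S0_def by auto
  define Z where "Z = (\<lambda>k. {z \<in> \<phi>0 ` U0. frechet_derivative f (at z) k = 0})"
  define \<G> where "\<G> = insert C ((\<lambda>k. C - Z k) ` (int_lattice - {0}))"
  have "C \<subseteq> closure (\<Inter>\<G>)"
  proof (rule Baire)
    show "closed C" unfolding C_def by simp
    show "countable \<G>" unfolding \<G>_def using countable_lattice by auto
    fix T assume "T \<in> \<G>"
    then consider "T = C" | k where "k \<in> int_lattice" "k \<noteq> 0" "T = C - Z k" unfolding \<G>_def by auto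
    then show "openin (top_of_set C) T \<and> C \<subseteq> closure T"
    proof cases
      case 1 then show ?thesis using closure_subset by auto
    next
      case 2
      have oT: "open (\<phi>0 ` U0 \<inter> (\<lambda>z. frechet_derivative f (at z) k) -` (- {0}))"
        using continuous_on_open_vimage[OF chart_facts(2)[OF at U0]] dcont[OF at sm U0, of k]
        unfolding f_def by (metis inf_commute open_Compl closed_singleton)
      have "T = (\<phi>0 ` U0 \<inter> (\<lambda>z. frechet_derivative f (at z) k) -` (- {0})) \<inter> C"
        using 2(3) CT unfolding Z_def by auto
      then have "openin (top_of_set C) T" using oT openin_open by blast
      moreover have "C \<subseteq> closure T"
      proof
        fix x assume xC: "x \<in> C"
        show "x \<in> closure T" unfolding closure_approachable
        proof (intro allI impI)
          fix e :: real assume e: "e > 0"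
          have "x \<in> closure (ball (\<phi>0 b0) r)" using xC r(1) closure_ball C_def by simp
          then obtain z where z: "z \<in> ball (\<phi>0 b0) r" "dist z x < e" using e closure_approachable by blast
          define B where "B = ball (\<phi>0 b0) r \<inter> ball x e"
          have "open B" unfolding B_def by (intro open_Int open_ball)
          moreover have "B \<noteq> {}" unfolding B_def using z by (auto simp: dist_commute)
          moreover have "B \<subseteq> \<phi>0 ` U0" unfolding B_def using CT C_def by auto
          ultimately have "\<not> (\<forall>z\<in>B. frechet_derivative (F \<circ> inv_into U0 \<phi>0) (at z) k = 0)"
            using no_interior[OF at sm ru U0 2(1,2)] by blast
          then obtain y where y: "y \<in> B" "frechet_derivative f (at y) k \<noteq> 0" unfolding f_def by blast
          then have "y \<in> T" using 2(3) B_def C_def Z_def by auto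
          moreover have "dist y x < e" using y B_def by (auto simp: dist_commute)
          ultimately show "\<exists>y\<in>T. dist y x < e" by blast
        qed
      qed
      ultimately show ?thesis by blast
    qed
  qed
  moreover have "\<phi>0 b0 \<in> C" unfolding C_def using r(1) by simp
  ultimately have "\<Inter>\<G> \<noteq> {}" by auto
  then obtain y where y: "y \<in> \<Inter>\<G>" by blast
  have yC: "y \<in> C" using y unfolding \<G>_def by auto
  have yZ: "y \<notin> Z k" if "k \<in> int_lattice" "k \<noteq> 0" for k
  proof -
    have "k \<in> int_lattice - {0}" using that by simp
    then have "C - Z k \<in> (\<lambda>k. C - Z k) ` (int_lattice - {0})" by (rule imageI)
    then have "C - Z k \<in> \<G>" unfolding \<G>_def by (rule insertI2)
    from InterD[OF y this] show ?thesis by simp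
  qed
  obtain w where w: "w \<in> W0" "w \<in> U0" "y = \<phi>0 w" using yC r(2) C_def S0_def by auto
  have yT: "y \<in> \<phi>0 ` U0" using w by auto
  have "nonresonant A F w"
    unfolding nonresonant_def
  proof (clarify)
    fix V \<psi> k assume V: "(V,\<psi>) \<in> A" and wV: "w \<in> V" and k: "k \<in> int_lattice" "k \<noteq> 0"
      and e: "dF F V \<psi> w k = 0"
    obtain N L where N: "open N" "w \<in> N" "linear L" "bij L" "L ` int_lattice = int_lattice" and
      d: "\<forall>y\<in>N \<inter> U0 \<inter> V. ((\<psi> \<circ> inv_into U0 \<phi>0) has_derivative L) (at (\<phi>0 y)) \<and>
        (\<forall>v. dF F U0 \<phi>0 y v = dF F V \<psi> y (L v))"
      using chart_trans[OF at sm U0 V w(2) wV] by blast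
    have wN: "w \<in> N \<inter> U0 \<inter> V" using N(2) w(2) wV by blast
    obtain m where m: "m \<in> int_lattice" "k = L m" using N(5) k(1) by blast
    have "m \<noteq> 0" using m k(2) linear_0[OF N(3)] by metis
    have "dF F U0 \<phi>0 w m = dF F V \<psi> w (L m)" using d wN by blast
    then have "dF F U0 \<phi>0 w m = dF F V \<psi> w k" using m(2) by simp
    then have "frechet_derivative f (at y) m = 0" using e w(3) unfolding dF_def f_def by simp
    then have "y \<in> Z m" using yT unfolding Z_def by simp
    then show False using yZ m(1) \<open>m \<noteq> 0\<close> by blast
  qed
  then show "W0 \<inter> {b. nonresonant A F b} \<noteq> {}" using w(1) by blast
qed

end
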